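(* Let $\epsilon\in(0,1)$. Let $x\in\{0,1\}^m$ and $y\in\{0,1\}^k$ be random variables satisfying the $\epsilon$-martingale condition with respect to the ordering $x_1,\dots,x_m,y_1,\dots,y_k$. Then \[ \Pr[\mu_x(y)\ge0]\le 3\exp\bigl(-\epsilon^4(1-O(\epsilon))k/64\bigr). \]
   Context: Characteristic strings and forks. A characteristic string is $w=w_1\dots w_n\in\{0,1\}^n$; index $i$ is honest if $w_i=0$ and adversarial if $w_i=1$. A fork for $w$ is a rooted tree with edges directed away from the root $r$ and labeling $\ell:V\to\{0,\dots,n\}$ with (F1) $\ell(r)=0$; (F2) labels strictly increasing along directed paths; (F3) each honest index labels exactly one vertex; (F4) for honest $i<j$ the vertex labeled $i$ has strictly smaller depth than the vertex labeled $j$. Write $F\vdash w$. A vertex is honest if it is the root or labeled by an honest index. A tine is a directed path from the root; its length is its number of edges, $\ell(t)$ the label of its last vertex. A fork is closed if every leaf is honest; a closed fork has a unique longest tine $\hat t$. For closed $F\vdash w$ and tine $t$: $\mathrm{gap}(t)=\mathrm{length}(\hat t)-\mathrm{length}(t)$, $\mathrm{reserve}(t)=|\{i:w_i=1,\ i>\ell(t)\}|$, $\mathrm{reach}(t)=\mathrm{reserve}(t)-\mathrm{gap}(t)$. For $w=xy$, tines are disjoint over $y$ if they share no edge terminating at a vertex with label $>|x|$ (a tine may be paired with itself). $\mu_x(F)=\max\min\{\mathrm{reach}(t_1),\mathrm{reach}(t_2)\}$ over pairs disjoint over $y$, and $\mu_x(y)=\max\{\mu_x(F):F\vdash xy\text{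 closed}\}$. A sequence of $\{0,1\}$-valued random variables $Z_1,\dots,Z_N$ satisfies the $\epsilon$-martingale condition if for every $t$, $\Pr[Z_t=1\mid Z_1,\dots,Z_{t-1}]\le(1-\epsilon)/2$ for arbitrary conditioning values. *)

theory Defs
  imports "HOL-Probability.Probability" "HOL-Library.Sublist"
begin

text \<open>Characteristic strings are bool lists; entry True = 1 (adversarial),
  False = 0 (honest). Index i (1-based) of w is w ! (i - 1).\<close>

definition honest_idx :: "bool list \<Rightarrow> nat \<Rightarrow> bool" where
  "honest_idx w i \<longleftrightarrow> 1 \<le> i \<and> i \<le> length w \<and> \<not> w ! (i - 1)"

definition adv_idx :: "bool list \<Rightarrow> nat \<Rightarrow> bool" where
  "adv_idx w i \<longleftrightarrow> 1 \<le> i \<and> i \<le> length w \<and> w ! (i - 1)"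

text \<open>A fork is a rooted tree given as a finite prefix-closed set V of
  nat lists (tree addresses; the root is [], the children of v are the
  elements v @ [i] of V; depth of v = length v) together with a labelling l.
  The tine ending at vertex v is identified with v.\<close>

definition is_fork :: "bool list \<Rightarrow> nat list set \<Rightarrow> (nat list \<Rightarrow> nat) \<Rightarrow> bool" where
  "is_fork w V l \<longleftrightarrow>
     finite V \<and> [] \<in> V \<and> (\<forall>v i. v @ [i] \<in> V \<longrightarrow> v \<in> V) \<and>
     (\<forall>v\<in>V. l v \<le> length w) \<and>
     l [] = 0 \<and>
     (\<forall>u\<in>V. \<forall>v\<in>V. strict_prefix u v \<longrightarrow> l u < l v) \<and>
     (\<forall>i. honest_idx w i \<longrightarrow> card {v\<in>V. l v = i} = 1) \<and>
     (\<forall>u\<in>V. \<forall>v\<in>V. honest_idx w (l u) \<and> honest_idx w (l v) \<and> l u < l v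
          \<longrightarrow> length u < length v)"

definition honest_vertex :: "bool list \<Rightarrow> (nat list \<Rightarrow> nat) \<Rightarrow> nat list \<Rightarrow> bool" where
  "honest_vertex w l v \<longleftrightarrow> v = [] \<or> honest_idx w (l v)"

definition closed_fork :: "bool list \<Rightarrow> nat list set \<Rightarrow> (nat list \<Rightarrow> nat) \<Rightarrow> bool" where
  "closed_fork w V l \<longleftrightarrow> (\<forall>v\<in>V. (\<forall>i. v @ [i] \<notin> V) \<longrightarrow> honest_vertex w l v)"

definition fork_height :: "nat list set \<Rightarrow> nat" where
  "fork_height V = Max (length ` V)"

definition gap :: "nat list set \<Rightarrow> nat list \<Rightarrow> int" where
  "gap V t = int (fork_height V) - int (length t)"

definition reserve :: "bool list \<Rightarrow> (nat list \<Rightarrow> nat) \<Rightarrow> nat list \<Rightarrow> nat" where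
  "reserve w l t = card {i. adv_idx w i \<and> l t < i}"

definition reach :: "bool list \<Rightarrow> nat list set \<Rightarrow> (nat list \<Rightarrow> nat) \<Rightarrow> nat list \<Rightarrow> int" where
  "reach w V l t = int (reserve w l t) - gap V t"

text \<open>Tines t1, t2 (w = x y, |x| = m) are disjoint over y if they share no
  edge terminating at a vertex with label > m; the edges of the tine t end at
  the nonempty prefixes of t.\<close>
definition disjoint_over :: "nat \<Rightarrow> (nat list \<Rightarrow> nat) \<Rightarrow> nat list \<Rightarrow> nat list \<Rightarrow> bool" where
  "disjoint_over m l t1 t2 \<longleftrightarrow>
     (\<forall>u. u \<noteq> [] \<and> prefix u t1 \<and> prefix u t2 \<longrightarrow> l u \<le> m)"

definition mu_fork :: "nat \<Rightarrow> bool list \<Rightarrow> nat list set \<Rightarrow> (nat list \<Rightarrow> nat) \<Rightarrow> int" where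
  "mu_fork m w V l =
     Max {min (reach w V l t1) (reach w V l t2) | t1 t2.
            t1 \<in> V \<and> t2 \<in> V \<and> disjoint_over m l t1 t2}"

definition mu :: "bool list \<Rightarrow> bool list \<Rightarrow> int" where
  "mu x y = Max {mu_fork (length x) (x @ y) V l | V l.
                   is_fork (x @ y) V l \<and> closed_fork (x @ y) V l}"

text \<open>epsilon-martingale condition for a distribution p on bool lists of length n:
  for each position t (0-based) and each prefix value u,
  Pr[Z_t = 1 and prefix = u] <= (1-eps)/2 * Pr[prefix = u]
  (the conditional form, vacuous on null conditioning events).\<close>
definition eps_martingale :: "real \<Rightarrow> nat \<Rightarrow> bool list pmf \<Rightarrow> bool" where
  "eps_martingale \<epsilon> n p \<longleftrightarrow>
     (\<forall>t<n. \<forall>u. length u = t \<longrightarrow>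
        measure_pmf.prob p {w. take t w = u \<and> w ! t}
          \<le> (1 - \<epsilon>) / 2 * measure_pmf.prob p {w. take t w = u})"

end

theory Submission
  imports Defs
begin



lemma fork_prefix_closed:
  assumes "is_fork w V l" "v \<in> V" "prefix u v" shows "u \<in> V"
proof -
  obtain zs where v: "v = u @ zs" using assms(3) prefix_def by blast
  have "u @ zs \<in> V \<Longrightarrow> u \<in> V" for zs
  proof (induction zs rule: rev_induct)
    case Nil then show ?case by simp
  next
    case (snoc z zs)
    then show ?case using assms(1) unfolding is_fork_def by (metis append_assoc)
  qed
  then show ?thesis using assms(2) v by blast
qed

lemma fork_len_le_label:
  assumes "is_fork w V l" "v \<in> V" shows "length v \<le> l v"
  using assms(2)
proof (induction v rule: rev_induct)
  case Nil then show ?case by simp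
next
  case (snoc x xs)
  have "xs \<in> V" using snoc.prems assms(1) unfolding is_fork_def by blast
  moreover have "strict_prefix xs (xs @ [x])" by (simp add: strict_prefix_def)
  ultimately have "l xs < l (xs @ [x])" using assms(1) snoc.prems unfolding is_fork_def by blast
  then show ?case using snoc.IH \<open>xs \<in> V\<close> by simp
qed

lemma fork_label_le: "is_fork w V l \<Longrightarrow> v \<in> V \<Longrightarrow> l v \<le> length w"
  unfolding is_fork_def by blast

lemma fork_finite: "is_fork w V l \<Longrightarrow> finite V" unfolding is_fork_def by blast
lemma fork_root: "is_fork w V l \<Longrightarrow> [] \<in> V" unfolding is_fork_def by blast
lemma fork_root_label: "is_fork w V l \<Longrightarrow> l [] = 0" unfolding is_fork_def by blast
lemma fork_mono: "is_fork w V l \<Longrightarrow> u \<in> V \<Longrightarrow> v \<in> V \<Longrightarrow> strict_prefix u v \<Longrightarrow> l u < l v"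
  unfolding is_fork_def by blast
lemma fork_honest_card: "is_fork w V l \<Longrightarrow> honest_idx w i \<Longrightarrow> card {v\<in>V. l v = i} = 1"
  unfolding is_fork_def by blast
lemma fork_depth: "is_fork w V l \<Longrightarrow> u \<in> V \<Longrightarrow> v \<in> V \<Longrightarrow> honest_idx w (l u) \<Longrightarrow> honest_idx w (l v)
   \<Longrightarrow> l u < l v \<Longrightarrow> length u < length v"
  unfolding is_fork_def by blast

lemma height_ge: "is_fork w V l \<Longrightarrow> t \<in> V \<Longrightarrow> length t \<le> fork_height V"
  unfolding fork_height_def by (simp add: fork_finite)

lemma height_le: "is_fork w V l \<Longrightarrow> fork_height V \<le> length w"
proof -
  assume f: "is_fork w V l"
  have "finite V" "V \<noteq> {}" using f fork_finite fork_root by blast+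
  then have "fork_height V \<in> length ` V" unfolding fork_height_def by simp
  then obtain v where "v \<in> V" "fork_height V = length v" by auto
  then show ?thesis using fork_len_le_label[OF f] fork_label_le[OF f] by (metis le_trans)
qed

lemma gap_nonneg: "is_fork w V l \<Longrightarrow> t \<in> V \<Longrightarrow> gap V t \<ge> 0"
  unfolding gap_def using height_ge by force

lemma reach_le_reserve: "is_fork w V l \<Longrightarrow> t \<in> V \<Longrightarrow> reach w V l t \<le> int (reserve w l t)"
  unfolding reach_def using gap_nonneg by force

lemma reach_ge: "is_fork w V l \<Longrightarrow> t \<in> V \<Longrightarrow> reach w V l t \<ge> - int (length w)"
  unfolding reach_def gap_def using height_le by force

lemma honest_snoc: "honest_idx (w @ [b]) i \<longleftrightarrow> honest_idx w i \<or> (i = Suc (length w) \<and> \<not> b)"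
  unfolding honest_idx_def by (cases "i \<le> length w") (auto simp: nth_append)

lemma adv_snoc: "adv_idx (w @ [b]) i \<longleftrightarrow> adv_idx w i \<or> (i = Suc (length w) \<and> b)"
  unfolding adv_idx_def by (cases "i \<le> length w") (auto simp: nth_append)

lemma adv_le: "adv_idx w i \<Longrightarrow> i \<le> length w" unfolding adv_idx_def by simp
lemma honest_le: "honest_idx w i \<Longrightarrow> i \<le> length w" unfolding honest_idx_def by simp
lemma honest_ge1: "honest_idx w i \<Longrightarrow> 1 \<le> i" unfolding honest_idx_def by simp

lemma finite_adv: "finite {i. adv_idx w i \<and> P i}"
  by (rule finite_subset[of _ "{..length w}"]) (auto dest: adv_le)

lemma leaf_of_max_label:
  assumes "is_fork w V l" "v \<in> V" "l v = length w" shows "v @ [i] \<notin> V"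
proof
  assume "v @ [i] \<in> V"
  then have "l v < l (v @ [i])" using fork_mono[OF assms(1) assms(2)] by (simp add: strict_prefix_def)
  moreover have "l (v @ [i]) \<le> length w" using fork_label_le[OF assms(1) \<open>v @ [i] \<in> V\<close>] .
  ultimately show False using assms(3) by simp
qed

lemma adv_step:
  assumes f: "is_fork (w @ [True]) V l" and c: "closed_fork (w @ [True]) V l"
  shows "is_fork w V l" "closed_fork w V l"
    "\<And>t. t \<in> V \<Longrightarrow> reach (w @ [True]) V l t = reach w V l t + 1"
proof -
  have lab: "l v \<le> length w" if "v \<in> V" for v
  proof (rule ccontr)
    assume "\<not> l v \<le> length w"
    with fork_label_le[OF f that] have eq: "l v = length (w @ [True])" by simp
    have "\<forall>i. v @ [i] \<notin> V" using leaf_of_max_label[OF f that eq] by blast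
    then have "honest_vertex (w @ [True]) l v" using c that unfolding closed_fork_def by blast
    moreover have "v \<noteq> []" using eq fork_root_label[OF f] by auto
    ultimately show False using eq unfolding honest_vertex_def
      by (simp add: honest_snoc) (meson honest_le Suc_n_not_le_n)
  qed
  show f': "is_fork w V l"
    using f lab unfolding is_fork_def by (simp add: honest_snoc)
  show "closed_fork w V l"
    using c lab unfolding closed_fork_def honest_vertex_def by (force simp: honest_snoc)
  fix t assume t: "t \<in> V"
  have "{i. adv_idx (w @ [True]) i \<and> l t < i} = insert (Suc (length w)) {i. adv_idx w i \<and> l t < i}"
    using lab[OF t] by (auto simp: adv_snoc)
  moreover have "Suc (length w) \<notin> {i. adv_idx w i \<and> l t < i}" using adv_le by fastforce
  ultimately have "reserve (w @ [True]) l t = reserve w l t + 1"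
    unfolding reserve_def using finite_adv by simp
  then show "reach (w @ [True]) V l t = reach w V l t + 1" unfolding reach_def by simp
qed

lemma prefix_child:
  assumes "prefix v u" "v \<noteq> u" shows "prefix (v @ [u ! length v]) u"
proof -
  obtain zs where u: "u = v @ zs" using assms(1) prefix_def by blast
  with assms(2) obtain z zs' where "zs = z # zs'" by (cases zs) auto
  then show ?thesis using u by simp
qed

lemma take_strict_prefix:
  assumes "j < j'" "j' \<le> length t" shows "strict_prefix (take j t) (take j' t)"
proof -
  have "prefix (take j t) (take j' t)" using assms
    by (metis le_less min.absorb1 nat_less_le prefix_order.eq_iff take_is_prefix take_take)
  moreover have "take j t \<noteq> take j' t" using assms by (metis length_take min.absorb2 nat_neq_iff le_trans less_imp_le)
  ultimately show ?thesis by (simp add: strict_prefix_def)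
qed

lemma honest_step:
  assumes f: "is_fork (w' @ [False]) V l" and c: "closed_fork (w' @ [False]) V l"
  obtains V' h where "is_fork w' V' l" "closed_fork w' V' l" "h \<in> V" "h \<noteq> []"
    "l h = Suc (length w')" "reach (w' @ [False]) V l h = 0"
    "\<And>t. t \<in> V \<Longrightarrow> t \<noteq> h \<Longrightarrow> \<exists>u\<in>V'. prefix u t \<and> reach (w' @ [False]) V l t \<le> reach w' V' l u - 1"
    "\<exists>u\<in>V'. prefix u h \<and> reach w' V' l u \<ge> 0"
proof -
  define w where "w = w' @ [False]"
  define n where "n = Suc (length w')"
  have lw: "length w = n" unfolding w_def n_def by simp
  have f: "is_fork w V l" and c: "closed_fork w V l" using assms w_def by auto
  have hon_n: "honest_idx w n" unfolding w_def n_def by (simp add: honest_snoc)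
  have "card {v\<in>V. l v = n} = 1" using fork_honest_card[OF f hon_n] .
  then obtain h where hset: "{v\<in>V. l v = n} = {h}" by (rule card_1_singletonE)
  have hV: "h \<in> V" and lh: "l h = n" using hset by auto
  have uniq: "v \<in> V \<Longrightarrow> l v = n \<Longrightarrow> v = h" for v using hset by auto
  have hne: "h \<noteq> []" using lh fork_root_label[OF f] n_def by auto
  have hleaf: "h @ [i] \<notin> V" for i using leaf_of_max_label[OF f hV] lh lw by simp
  have hon_w: "honest_idx w i" if "honest_idx w' i" for i using that unfolding w_def by (simp add: honest_snoc)
  have hon_lt: "i < n" if "honest_idx w' i" for i using honest_le[OF that] n_def by simp
  have finV: "finite V" using fork_finite[OF f] .
  have pc: "v \<in> V \<Longrightarrow> prefix u v \<Longrightarrow> u \<in> V" for u v using fork_prefix_closed[OF f] by blast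
  have all_le: "length v \<le> length h" if vV: "v \<in> V" for v
  proof -
    have "\<exists>u. (u \<in> V \<and> prefix v u) \<and> (\<forall>y. (y \<in> V \<and> prefix v y) \<longrightarrow> length y \<le> length u)"
      apply (rule ex_has_greatest_nat[where b = "Suc (length w)"])
      using vV apply blast
      using fork_len_le_label[OF f] fork_label_le[OF f] by (meson le_trans le_imp_less_Suc)
    then obtain u where uV: "u \<in> V" and vu: "prefix v u" and umax: "\<And>y. y \<in> V \<Longrightarrow> prefix v y \<Longrightarrow> length y \<le> length u"
      by blast
    have "u @ [i] \<notin> V" for i
    proof
      assume "u @ [i] \<in> V"
      moreover have "prefix v (u @ [i])" using vu prefix_order.trans[of v u "u @ [i]"] by simp
      ultimately have "length (u @ [i]) \<le> length u" using umax by blast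
      then show False by simp
    qed
    then have "honest_vertex w l u" using c uV unfolding closed_fork_def by blast
    then have "length u \<le> length h"
    proof (cases "u = []")
      case True then show ?thesis by simp
    next
      case False
      then have hu: "honest_idx w (l u)" using \<open>honest_vertex w l u\<close> unfolding honest_vertex_def by simp
      show ?thesis
      proof (cases "l u = n")
        case True then show ?thesis using uniq uV by simp
      next
        case False
        then have "l u < n" using fork_label_le[OF f uV] lw by simp
        then show ?thesis using fork_depth[OF f uV hV hu] hon_n lh by simp
      qed
    qed
    then show ?thesis using prefix_length_le[OF vu] by simp
  qed
  have heightV: "fork_height V = length h"
    unfolding fork_height_def using finV hV all_le by (intro Max_eqI) auto
  have reach_h: "reach w V l h = 0"
  proof -
    have e: "{i. adv_idx w i \<and> l h < i} = {}" using adv_le lw lh by fastforce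
    have "reserve w l h = 0" unfolding reserve_def by (metis card.empty e)
    then show ?thesis unfolding reach_def gap_def heightV by simp
  qed
  define V' where "V' = {v\<in>V. \<exists>u\<in>V. prefix v u \<and> (u = [] \<or> honest_idx w' (l u))}"
  have V'sub: "V' \<subseteq> V" unfolding V'_def by blast
  have rootV': "[] \<in> V'" unfolding V'_def using fork_root[OF f] by blast
  have V'len: "length v < length h" if vV'0: "v \<in> V'" for v
  proof -
    obtain u where uV: "u \<in> V" and vu: "prefix v u" and hu: "u = [] \<or> honest_idx w' (l u)"
      using vV'0 unfolding V'_def by blast
    have "length u < length h"
    proof (cases "u = []")
      case True then show ?thesis using hne by simp
    next
      case False
      then have "honest_idx w' (l u)" using hu by simp
      then show ?thesis using fork_depth[OF f uV hV] hon_w hon_n hon_lt lh by simp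
    qed
    then show ?thesis using prefix_length_le[OF vu] by simp
  qed
  have f': "is_fork w' V' l"
    unfolding is_fork_def
  proof (intro conjI)
    show "finite V'" using finite_subset[OF V'sub finV] .
    show "[] \<in> V'" by (rule rootV')
    show "\<forall>v i. v @ [i] \<in> V' \<longrightarrow> v \<in> V'"
    proof (intro allI impI)
      fix v i assume "v @ [i] \<in> V'"
      then obtain u where "u \<in> V" "prefix (v @ [i]) u" "u = [] \<or> honest_idx w' (l u)" "v @ [i] \<in> V"
        unfolding V'_def by blast
      moreover have "v \<in> V" using pc[OF \<open>v @ [i] \<in> V\<close>] by simp
      moreover have "prefix v (v @ [i])" by simp
      ultimately show "v \<in> V'" unfolding V'_def using prefix_order.trans by blast
    qed
    show "\<forall>v\<in>V'. l v \<le> length w'"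
    proof
      fix v assume "v \<in> V'"
      then obtain u where uV: "u \<in> V" and vu: "prefix v u" and hu: "u = [] \<or> honest_idx w' (l u)" and vV: "v \<in> V"
        unfolding V'_def by blast
      show "l v \<le> length w'"
      proof (cases "u = []")
        case True then show ?thesis using vu fork_root_label[OF f] by simp
      next
        case False
        then have "l u \<le> length w'" using hu honest_le by blast
        moreover have "l v \<le> l u"
          using fork_mono[OF f vV uV] vu by (cases "v = u") (auto simp: strict_prefix_def)
        ultimately show ?thesis by simp
      qed
    qed
    show "l [] = 0" using fork_root_label[OF f] .
    show "\<forall>u\<in>V'. \<forall>v\<in>V'. strict_prefix u v \<longrightarrow> l u < l v" using fork_mono[OF f] V'sub by blast
    show "\<forall>i. honest_idx w' i \<longrightarrow> card {v\<in>V'. l v = i} = 1"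
    proof (intro allI impI)
      fix i assume hi: "honest_idx w' i"
      have "{v\<in>V'. l v = i} = {v\<in>V. l v = i}" using hi V'sub unfolding V'_def by auto
      then show "card {v\<in>V'. l v = i} = 1" using fork_honest_card[OF f hon_w[OF hi]] by simp
    qed
    show "\<forall>u\<in>V'. \<forall>v\<in>V'. honest_idx w' (l u) \<and> honest_idx w' (l v) \<and> l u < l v \<longrightarrow> length u < length v"
      using fork_depth[OF f] hon_w V'sub by blast
  qed
  have c': "closed_fork w' V' l"
    unfolding closed_fork_def
  proof (intro ballI impI)
    fix v assume vV': "v \<in> V'" and leaf: "\<forall>i. v @ [i] \<notin> V'"
    obtain u where uV: "u \<in> V" and vu: "prefix v u" and hu: "u = [] \<or> honest_idx w' (l u)"
      using vV' unfolding V'_def by blast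
    show "honest_vertex w' l v"
    proof (cases "v = u")
      case True then show ?thesis using hu unfolding honest_vertex_def by blast
    next
      case False
      have ch: "prefix (v @ [u ! length v]) u" using prefix_child[OF vu False] .
      then have "v @ [u ! length v] \<in> V'" unfolding V'_def using pc[OF uV ch] uV hu by blast
      then show ?thesis using leaf by blast
    qed
  qed
  have finV': "finite V'" using finite_subset[OF V'sub finV] .
  have hV': "int (fork_height V') + 1 \<le> int (length h)"
  proof -
    have "fork_height V' \<in> length ` V'" unfolding fork_height_def using finV' rootV' by (intro Max_in) auto
    then obtain x where "x \<in> V'" "fork_height V' = length x" by auto
    then show ?thesis using V'len[of x] by simp
  qed
  have adv_eq: "{i. adv_idx w i \<and> P i} = {i. adv_idx w' i \<and> P i}" for P
    unfolding w_def by (auto simp: adv_snoc)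
  have path: "\<exists>u\<in>V'. prefix u t \<and> int (reserve w l t) + int (length t) - int (length u) - (if t = h then 1 else 0) \<le> int (reserve w' l u)"
    if tV: "t \<in> V" for t
  proof -
    define J where "J = {j. j \<le> length t \<and> take j t \<in> V'}"
    have finJ: "finite J" by (rule finite_subset[of _ "{..length t}"]) (auto simp: J_def)
    have "0 \<in> J" unfolding J_def using rootV' by simp
    define j0 where "j0 = Max J"
    have j0J: "j0 \<in> J" unfolding j0_def using finJ \<open>0 \<in> J\<close> by (intro Max_in) auto
    have j0max: "j \<in> J \<Longrightarrow> j \<le> j0" for j unfolding j0_def using finJ by simp
    define u where "u = take j0 t"
    have uV': "u \<in> V'" and j0le: "j0 \<le> length t" using j0J unfolding J_def u_def by auto
    have lu: "length u = j0" unfolding u_def using j0le by simp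
    have ut: "prefix u t" unfolding u_def by (rule take_is_prefix)
    have takeV: "take j t \<in> V" for j using pc[OF tV take_is_prefix] .
    define g where "g j = l (take j t)" for j
    have gmono: "g j < g j'" if "j < j'" "j' \<le> length t" for j j'
      unfolding g_def using fork_mono[OF f takeV takeV take_strict_prefix[OF that]] .
    define P where "P = {j. j0 < j \<and> j \<le> length t \<and> take j t \<noteq> h}"
    have finP: "finite P" by (rule finite_subset[of _ "{..length t}"]) (auto simp: P_def)
    have Padv: "adv_idx w' (g j)" if jP: "j \<in> P" for j
    proof -
      have j: "j0 < j" "j \<le> length t" "take j t \<noteq> h" using jP unfolding P_def by auto
      have notV': "take j t \<notin> V'"
      proof
        assume "take j t \<in> V'"
        then have "j \<in> J" using j unfolding J_def by simp
        then show False using j0max[of j] j(1) by simp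
      qed
      have nh: "\<not> honest_idx w' (g j)"
      proof
        assume "honest_idx w' (g j)"
        then have "take j t \<in> V'" unfolding V'_def g_def using takeV[of j] by auto
        then show False using notV' by simp
      qed
      have "g 0 < g j" using gmono j by simp
      then have g1: "1 \<le> g j" unfolding g_def using fork_root_label[OF f] by simp
      have "g j \<noteq> n" using uniq[OF takeV] j(3) unfolding g_def by blast
      then have "g j \<le> length w'" using fork_label_le[OF f takeV[of j]] lw n_def unfolding g_def by simp
      then show ?thesis using nh g1 unfolding honest_idx_def adv_idx_def by simp
    qed
    have injg: "inj_on g P"
    proof (rule inj_onI)
      fix a b assume "a \<in> P" "b \<in> P" "g a = g b"
      then have ab: "a \<le> length t" "b \<le> length t" "g a = g b" unfolding P_def by auto
      show "a = b"
      proof (rule ccontr)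
        assume "a \<noteq> b"
        then consider "a < b" | "b < a" by linarith
        then show False using gmono[of a b] gmono[of b a] ab by (cases) auto
      qed
    qed
    have gP_sub: "g ` P \<subseteq> {i. adv_idx w' i \<and> l u < i}"
    proof
      fix i assume "i \<in> g ` P"
      then obtain j where "j \<in> P" and ij: "i = g j" by blast
      have "l u < g j"
      proof -
        from \<open>j \<in> P\<close> have "j0 < j" "j \<le> length t" unfolding P_def by auto
        then show "l u < g j" using gmono[of j0 j] unfolding u_def g_def by simp
      qed
      then show "i \<in> {i. adv_idx w' i \<and> l u < i}" using Padv[OF \<open>j \<in> P\<close>] ij by simp
    qed
    have gP_le: "g ` P \<subseteq> {..l t}"
    proof
      fix i assume "i \<in> g ` P"
      then obtain j where "j \<in> P" "i = g j" by blast
      then have "j \<le> length t" unfolding P_def by simp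
      then show "i \<in> {..l t}"
        using gmono[of j "length t"] \<open>i = g j\<close> unfolding g_def by (cases "j = length t") auto
    qed
    have disj: "{i. adv_idx w' i \<and> l t < i} \<inter> g ` P = {}" using gP_le by auto
    have sub2: "{i. adv_idx w' i \<and> l t < i} \<union> g ` P \<subseteq> {i. adv_idx w' i \<and> l u < i}"
    proof -
      have "l u \<le> l t" using fork_mono[OF f pc[OF tV ut] tV] ut by (cases "u = t") (auto simp: strict_prefix_def)
      then show ?thesis using gP_sub by auto
    qed
    have "card ({i. adv_idx w' i \<and> l t < i} \<union> g ` P) \<le> reserve w' l u"
      unfolding reserve_def by (rule card_mono[OF finite_adv sub2])
    moreover have "card ({i. adv_idx w' i \<and> l t < i} \<union> g ` P) = reserve w l t + card P"
      unfolding reserve_def adv_eq using card_Un_disjoint[OF finite_adv finite_imageI[OF finP] disj]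
        card_image[OF injg] by simp
    ultimately have key: "reserve w l t + card P \<le> reserve w' l u" by simp
    have cardP: "int (card P) \<ge> int (length t) - int j0 - (if t = h then 1 else 0)"
    proof (cases "t = h")
      case True
      have "{j0<..<length t} \<subseteq> P" unfolding P_def using True by auto
      then have "card {j0<..<length t} \<le> card P" using card_mono[OF finP] by blast
      then show ?thesis using True by simp
    next
      case False
      have nt: "take j t \<noteq> h" if "j \<le> length t" for j
      proof
        assume th: "take j t = h"
        then have "prefix h t" using take_is_prefix by metis
        then have "prefix (h @ [t ! length h]) t" using prefix_child False by blast
        then show False using hleaf pc[OF tV] by blast
      qed
      have "{j0<..length t} \<subseteq> P"
      proof
        fix j assume "j \<in> {j0<..length t}"
        then show "j \<in> P" unfolding P_def using nt[of j] by auto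
      qed
      then have "card {j0<..length t} \<le> card P" using card_mono[OF finP] by blast
      then show ?thesis using False by simp
    qed
    show ?thesis using uV' ut key cardP lu by force
  qed
  show ?thesis
  proof (rule that[OF f' c' hV hne])
    show "l h = Suc (length w')" using lh n_def by simp
    show "reach (w' @ [False]) V l h = 0" using reach_h w_def by simp
    show "\<exists>u\<in>V'. prefix u t \<and> reach (w' @ [False]) V l t \<le> reach w' V' l u - 1"
      if tV: "t \<in> V" and th: "t \<noteq> h" for t
    proof -
      obtain u where uV': "u \<in> V'" and ut: "prefix u t" and
        r: "int (reserve w l t) + int (length t) - int (length u) \<le> int (reserve w' l u)"
        using path[OF tV] th by auto
      have "reach w V l t \<le> reach w' V' l u - 1"
        unfolding reach_def gap_def heightV using r hV' by linarith
      then show ?thesis using uV' ut w_def by auto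
    qed
    show "\<exists>u\<in>V'. prefix u h \<and> reach w' V' l u \<ge> 0"
    proof -
      obtain u where uV': "u \<in> V'" and ut: "prefix u h" and
        r: "int (reserve w l h) + int (length h) - int (length u) - 1 \<le> int (reserve w' l u)"
        using path[OF hV] by auto
      have "reach w' V' l u \<ge> 0"
        unfolding reach_def gap_def using r hV' by linarith
      then show ?thesis using uV' ut by auto
    qed
  qed
qed




definition stepR :: "nat \<Rightarrow> bool \<Rightarrow> nat" where "stepR r b = (if b then Suc r else r - 1)"
definition Rf :: "bool list \<Rightarrow> nat" where "Rf w = foldl stepR 0 w"
definition stepS :: "nat \<times> int \<Rightarrow> bool \<Rightarrow> nat \<times> int" where
  "stepS s b = (stepR (fst s) b, if b then snd s + 1 else if snd s = 0 \<and> fst s > 0 then 0 else snd s - 1)"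
definition St :: "bool list \<Rightarrow> bool list \<Rightarrow> nat \<times> int" where
  "St x y = foldl stepS (Rf x, int (Rf x)) y"

lemma Rf_snoc: "Rf (w @ [b]) = stepR (Rf w) b" by (simp add: Rf_def)
lemma St_snoc: "St x (y @ [b]) = stepS (St x y) b" by (simp add: St_def)
lemma St_Nil: "St x [] = (Rf x, int (Rf x))" by (simp add: St_def)
lemma St_fst: "fst (St x y) = Rf (x @ y)"
proof (induction y rule: rev_induct)
  case Nil then show ?case by (simp add: St_Nil)
next
  case (snoc b y) then show ?case
    by (simp add: St_snoc stepS_def Rf_snoc flip: append_assoc)
qed

lemma rho_bound: "is_fork w V l \<Longrightarrow> closed_fork w V l \<Longrightarrow> t \<in> V \<Longrightarrow> reach w V l t \<le> int (Rf w)"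
proof (induction w arbitrary: V l t rule: rev_induct)
  case Nil
  have "{i. adv_idx [] i \<and> l t < i} = {}" using adv_le adv_idx_def by fastforce
  then have "reserve [] l t = 0" unfolding reserve_def by (metis card.empty)
  then show ?case using reach_le_reserve[OF Nil(1,3)] by simp
next
  case (snoc b w)
  show ?case
  proof (cases b)
    case True
    have f: "is_fork (w @ [True]) V l" and c: "closed_fork (w @ [True]) V l" using snoc True by auto
    have "reach (w @ [True]) V l t = reach w V l t + 1" using adv_step(3)[OF f c snoc(4)] .
    moreover have "reach w V l t \<le> int (Rf w)" using snoc.IH[OF adv_step(1,2)[OF f c] snoc(4)] .
    ultimately show ?thesis using True by (simp add: Rf_snoc stepR_def)
  next
    case False
    have f: "is_fork (w @ [False]) V l" and c: "closed_fork (w @ [False]) V l" using snoc False by auto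
    obtain V' h where f': "is_fork w V' l" and c': "closed_fork w V' l" and hV: "h \<in> V"
      and rh: "reach (w @ [False]) V l h = 0"
      and st: "\<And>t. t \<in> V \<Longrightarrow> t \<noteq> h \<Longrightarrow> \<exists>u\<in>V'. prefix u t \<and> reach (w @ [False]) V l t \<le> reach w V' l u - 1"
      by (rule honest_step[OF f c]) blast
    show ?thesis
    proof (cases "t = h")
      case True then show ?thesis using rh False by simp
    next
      case tne: False
      obtain u where "u \<in> V'" "reach (w @ [False]) V l t \<le> reach w V' l u - 1" using st[OF snoc(4) tne] by blast
      moreover have "reach w V' l u \<le> int (Rf w)" using snoc.IH[OF f' c' \<open>u \<in> V'\<close>] .
      ultimately show ?thesis using False by (simp add: Rf_snoc stepR_def)
    qed
  qed
qed

lemma disjoint_prefix: "disjoint_over m l t1 t2 \<Longrightarrow> prefix u1 t1 \<Longrightarrow> prefix u2 t2 \<Longrightarrow> disjoint_over m l u1 u2"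
  unfolding disjoint_over_def using prefix_order.trans by blast

lemma disjoint_sym: "disjoint_over m l t1 t2 \<Longrightarrow> disjoint_over m l t2 t1"
  unfolding disjoint_over_def by blast

lemma key_arith:
  fixes a r2 M t :: int and R :: nat
  assumes "min a r2 \<le> M" "a \<ge> 0" "r2 \<le> int R" "t \<le> r2 - 1"
  shows "min 0 t \<le> (if M = 0 \<and> R > 0 then 0 else M - 1)"
  using assms by (cases "M = 0 \<and> R > 0") (auto simp: min_def split: if_splits)

lemma mu_bound:
  "is_fork (x @ y) V l \<Longrightarrow> closed_fork (x @ y) V l \<Longrightarrow> t1 \<in> V \<Longrightarrow> t2 \<in> V \<Longrightarrow>
   disjoint_over (length x) l t1 t2 \<Longrightarrow>
   min (reach (x @ y) V l t1) (reach (x @ y) V l t2) \<le> snd (St x y)"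
proof (induction y arbitrary: V l t1 t2 rule: rev_induct)
  case Nil
  have "reach (x @ []) V l t1 \<le> int (Rf x)" using rho_bound[OF Nil(1,2,3)] by simp
  then show ?case by (simp add: St_Nil)
next
  case (snoc b y)
  define w where "w = x @ y"
  have wb: "x @ y @ [b] = w @ [b]" unfolding w_def by simp
  show ?case
  proof (cases b)
    case True
    have f: "is_fork (w @ [True]) V l" and c: "closed_fork (w @ [True]) V l" using snoc True wb by auto
    have "min (reach w V l t1) (reach w V l t2) \<le> snd (St x y)"
      using snoc.IH[OF adv_step(1,2)[OF f c, unfolded w_def] snoc(4,5,6)] w_def by simp
    then show ?thesis using adv_step(3)[OF f c snoc(4)] adv_step(3)[OF f c snoc(5)] True
      unfolding w_def by (simp add: St_snoc stepS_def)
  next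
    case False
    have f: "is_fork (w @ [False]) V l" and c: "closed_fork (w @ [False]) V l" using snoc False wb by auto
    obtain V' h where f': "is_fork w V' l" and c': "closed_fork w V' l" and hV: "h \<in> V" and hne: "h \<noteq> []"
      and lh: "l h = Suc (length w)"
      and rh: "reach (w @ [False]) V l h = 0"
      and st: "\<And>t. t \<in> V \<Longrightarrow> t \<noteq> h \<Longrightarrow> \<exists>u\<in>V'. prefix u t \<and> reach (w @ [False]) V l t \<le> reach w V' l u - 1"
      and sh: "\<exists>u\<in>V'. prefix u h \<and> reach w V' l u \<ge> 0"
      by (rule honest_step[OF f c]) blast
    define M where "M = snd (St x y)"
    define R where "R = fst (St x y)"
    have RR: "R = Rf w" unfolding R_def w_def by (simp add: St_fst)
    have new: "snd (St x (y @ [False])) = (if M = 0 \<and> R > 0 then 0 else M - 1)"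
      unfolding M_def R_def by (simp add: St_snoc stepS_def)
    have IH: "min (reach w V' l u1) (reach w V' l u2) \<le> M"
      if "u1 \<in> V'" "u2 \<in> V'" "disjoint_over (length x) l u1 u2" for u1 u2
      using snoc.IH[OF _ _ that] f' c' w_def M_def by simp
    have hh: "\<not> disjoint_over (length x) l h h"
      unfolding disjoint_over_def using hne lh w_def by auto
    have side: "min (reach (w @ [False]) V l h) (reach (w @ [False]) V l t) \<le> (if M = 0 \<and> R > 0 then 0 else M - 1)"
      if tV: "t \<in> V" and dj: "disjoint_over (length x) l h t" for t
    proof -
      have tne: "t \<noteq> h" using dj hh by blast
      obtain u2 where u2: "u2 \<in> V'" "prefix u2 t" "reach (w @ [False]) V l t \<le> reach w V' l u2 - 1"
        using st[OF tV tne] by blast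
      obtain u1 where u1: "u1 \<in> V'" "prefix u1 h" "reach w V' l u1 \<ge> 0" using sh by blast
      have "min (reach w V' l u1) (reach w V' l u2) \<le> M"
        using IH[OF u1(1) u2(1) disjoint_prefix[OF dj u1(2) u2(2)]] .
      moreover have "reach w V' l u2 \<le> int R" using rho_bound[OF f' c' u2(1)] RR by simp
      ultimately show ?thesis using key_arith[OF _ u1(3) _ u2(3)] rh by simp
    qed
    have "min (reach (w @ [False]) V l t1) (reach (w @ [False]) V l t2) \<le> (if M = 0 \<and> R > 0 then 0 else M - 1)"
    proof (cases "t1 = h")
      case True
      then show ?thesis using side[OF snoc(5)] snoc(6) by simp
    next
      case t1ne: False
      show ?thesis
      proof (cases "t2 = h")
        case True
        then show ?thesis using side[OF snoc(4)] disjoint_sym[OF snoc(6)] by (simp add: min.commute)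
      next
        case t2ne: False
        obtain u1 where u1: "u1 \<in> V'" "prefix u1 t1" "reach (w @ [False]) V l t1 \<le> reach w V' l u1 - 1"
          using st[OF snoc(4) t1ne] by blast
        obtain u2 where u2: "u2 \<in> V'" "prefix u2 t2" "reach (w @ [False]) V l t2 \<le> reach w V' l u2 - 1"
          using st[OF snoc(5) t2ne] by blast
        have "min (reach w V' l u1) (reach w V' l u2) \<le> M"
          using IH[OF u1(1) u2(1) disjoint_prefix[OF snoc(6) u1(2) u2(2)]] .
        then show ?thesis using u1(3) u2(3) by (auto simp: min_def split: if_splits)
      qed
    qed
    then show ?thesis using new False unfolding w_def by simp
  qed
qed




lemma exists_closed_fork: "\<exists>V l. is_fork w V l \<and> closed_fork w V l"
proof -
  define hs where "hs = filter (\<lambda>i. \<not> w ! (i - 1)) [1..<Suc (length w)]"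
  define V where "V = (\<lambda>j. replicate j (0::nat)) ` {..length hs}"
  define l where "l v = (if v = [] then 0 else hs ! (length v - 1))" for v :: "nat list"
  have sorted: "sorted_wrt (<) hs" unfolding hs_def by (rule sorted_wrt_filter, rule sorted_wrt_upt)
  have dist: "distinct hs" unfolding hs_def by simp
  have set_hs: "set hs = {i. honest_idx w i}" unfolding hs_def honest_idx_def by auto
  have hs_ge: "1 \<le> hs ! k" "hs ! k \<le> length w" if "k < length hs" for k
    using nth_mem[OF that] set_hs honest_idx_def by auto
  have lrep: "l (replicate j 0) = (if j = 0 then 0 else hs ! (j - 1))" for j unfolding l_def by simp
  have mono: "l (replicate a 0) < l (replicate b 0)" if "a < b" "b \<le> length hs" for a b
  proof (cases "a = 0")
    case True
    have "b - 1 < length hs" using that by simp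
    then show ?thesis using True that hs_ge(1)[of "b - 1"] by (simp add: lrep l_def)
  next
    case False then show ?thesis using that sorted_wrt_nth_less[OF sorted, of "a - 1" "b - 1"] by (simp add: lrep)
  qed
  have Vmem: "v \<in> V \<longleftrightarrow> (\<exists>j\<le>length hs. v = replicate j 0)" for v unfolding V_def by auto
  have f: "is_fork w V l"
    unfolding is_fork_def
  proof (intro conjI)
    show "finite V" unfolding V_def by simp
    show "[] \<in> V" unfolding Vmem by (intro exI[of _ 0]) simp
    show "\<forall>v i. v @ [i] \<in> V \<longrightarrow> v \<in> V"
    proof (intro allI impI)
      fix v i assume "v @ [i] \<in> V"
      then obtain j where j: "j \<le> length hs" "v @ [i] = replicate j 0" unfolding Vmem by blast
      obtain j' where j': "j = Suc j'" using j(2) by (cases j) auto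
      have "replicate j (0::nat) = replicate j' 0 @ [0]" unfolding j' by (simp add: replicate_append_same)
      then have "v @ [i] = replicate j' 0 @ [0]" using j(2) by metis
      then have "v = replicate j' 0" by (rule append1_eq_conv[THEN iffD1, THEN conjunct1])
      then show "v \<in> V" unfolding Vmem using j(1) j' by (intro exI[of _ "j'"]) simp
    qed
    show "\<forall>v\<in>V. l v \<le> length w"
    proof
      fix v assume "v \<in> V"
      then obtain j where "j \<le> length hs" "v = replicate j 0" unfolding Vmem by blast
      then show "l v \<le> length w" using hs_ge(2)[of "j - 1"] by (cases "j = 0") (simp_all add: lrep l_def)
    qed
    show "l [] = 0" unfolding l_def by simp
    show "\<forall>u\<in>V. \<forall>v\<in>V. strict_prefix u v \<longrightarrow> l u < l v"
    proof (intro ballI impI)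
      fix u v assume "u \<in> V" "v \<in> V" "strict_prefix u v"
      then obtain a b where "a \<le> length hs" "b \<le> length hs" "u = replicate a 0" "v = replicate b 0"
        unfolding Vmem by blast
      moreover have "length u < length v" using prefix_length_less[OF \<open>strict_prefix u v\<close>] .
      ultimately show "l u < l v" using mono by simp
    qed
    show "\<forall>i. honest_idx w i \<longrightarrow> card {v\<in>V. l v = i} = 1"
    proof (intro allI impI)
      fix i assume "honest_idx w i"
      then have "i \<in> set hs" using set_hs by simp
      then obtain k where k: "k < length hs" "hs ! k = i" by (meson in_set_conv_nth)
      have "{v\<in>V. l v = i} = {replicate (Suc k) (0::nat)}"
      proof (rule set_eqI, rule iffI)
        fix v assume "v \<in> {v\<in>V. l v = i}"
        then obtain j where j: "j \<le> length hs" "v = replicate j 0" "l v = i" unfolding Vmem by blast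
        have "j \<noteq> 0" using j k hs_ge(1)[of k] by (auto simp: lrep split: if_splits)
        then have "hs ! (j - 1) = hs ! k" using j k by (simp add: lrep)
        then have "j - 1 = k" using nth_eq_iff_index_eq[OF dist] j(1) k(1) \<open>j \<noteq> 0\<close> by simp
        then have "j = Suc k" using \<open>j \<noteq> 0\<close> by simp
        then show "v \<in> {replicate (Suc k) (0::nat)}" using j(2) by simp
      next
        fix v assume "v \<in> {replicate (Suc k) (0::nat)}"
        then have "v = replicate (Suc k) 0" by simp
        moreover have "l (replicate (Suc k) 0) = i" using k lrep[of "Suc k"] by simp
        moreover have "replicate (Suc k) 0 \<in> V" unfolding Vmem using k by (intro exI[of _ "Suc k"]) simp
        ultimately show "v \<in> {v\<in>V. l v = i}" by simp
      qed
      then show "card {v\<in>V. l v = i} = 1" by simp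
    qed
    show "\<forall>u\<in>V. \<forall>v\<in>V. honest_idx w (l u) \<and> honest_idx w (l v) \<and> l u < l v \<longrightarrow> length u < length v"
    proof (intro ballI impI)
      fix u v assume "u \<in> V" "v \<in> V" "honest_idx w (l u) \<and> honest_idx w (l v) \<and> l u < l v"
      then obtain a b where ab: "a \<le> length hs" "b \<le> length hs" "u = replicate a 0" "v = replicate b 0"
        "l u < l v" unfolding Vmem by blast
      show "length u < length v"
      proof (rule ccontr)
        assume "\<not> length u < length v"
        then have "b \<le> a" using ab by simp
        then have "l v \<le> l u" using mono[of b a] ab by (cases "b = a") auto
        then show False using ab by simp
      qed
    qed
  qed
  have c: "closed_fork w V l"
    unfolding closed_fork_def
  proof (intro ballI impI)
    fix v assume "v \<in> V" and leaf: "\<forall>i. v @ [i] \<notin> V"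
    then obtain j where j: "j \<le> length hs" "v = replicate j 0" unfolding Vmem by blast
    have "j = length hs"
    proof (rule ccontr)
      assume "j \<noteq> length hs"
      then have "v @ [0] \<in> V" unfolding Vmem using j
        by (intro exI[of _ "Suc j"]) (simp add: replicate_append_same)
      then show False using leaf by blast
    qed
    show "honest_vertex w l v"
    proof (cases "j = 0")
      case True then show ?thesis using j unfolding honest_vertex_def by simp
    next
      case False
      then have "hs ! (j - 1) \<in> set hs" using j by simp
      then show ?thesis using j False set_hs unfolding honest_vertex_def by (simp add: lrep)
    qed
  qed
  show ?thesis using f c by blast
qed

definition pairset :: "nat \<Rightarrow> bool list \<Rightarrow> nat list set \<Rightarrow> (nat list \<Rightarrow> nat) \<Rightarrow> int set" where
  "pairset m w V l = {min (reach w V l t1) (reach w V l t2) | t1 t2.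
            t1 \<in> V \<and> t2 \<in> V \<and> disjoint_over m l t1 t2}"

lemma pairset_props:
  assumes f: "is_fork w V l"
  shows "finite (pairset m w V l)" "reach w V l [] \<in> pairset m w V l"
proof -
  have "pairset m w V l \<subseteq> (\<lambda>(a, b). min (reach w V l a) (reach w V l b)) ` (V \<times> V)"
    unfolding pairset_def by auto
  then show "finite (pairset m w V l)" using fork_finite[OF f] finite_subset by blast
  have "disjoint_over m l [] []" unfolding disjoint_over_def by simp
  then show "reach w V l [] \<in> pairset m w V l" unfolding pairset_def using fork_root[OF f] by force
qed

lemma mu_fork_in: "is_fork w V l \<Longrightarrow> mu_fork m w V l \<in> pairset m w V l"
  unfolding mu_fork_def pairset_def[symmetric] using pairset_props by (intro Max_in) blast+

lemma mu_fork_ge: "is_fork w V l \<Longrightarrow> mu_fork m w V l \<ge> - int (length w)"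
proof -
  assume f: "is_fork w V l"
  have "reach w V l [] \<le> mu_fork m w V l"
    unfolding mu_fork_def pairset_def[symmetric] using pairset_props[OF f] by (intro Max_ge) blast+
  then show ?thesis using reach_ge[OF f fork_root[OF f]] by simp
qed

lemma mu_le: "mu x y \<le> snd (St x y)"
proof -
  define S where "S = {mu_fork (length x) (x @ y) V l | V l. is_fork (x @ y) V l \<and> closed_fork (x @ y) V l}"
  have le: "s \<le> snd (St x y)" if sS: "s \<in> S" for s
  proof -
    obtain V l where Vl: "s = mu_fork (length x) (x @ y) V l" "is_fork (x @ y) V l" "closed_fork (x @ y) V l"
      using sS unfolding S_def by blast
    have "s \<in> pairset (length x) (x @ y) V l" using mu_fork_in[OF Vl(2)] Vl(1) by simp
    then obtain t1 t2 where "t1 \<in> V" "t2 \<in> V" "disjoint_over (length x) l t1 t2"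
      "s = min (reach (x @ y) V l t1) (reach (x @ y) V l t2)" unfolding pairset_def by blast
    then show ?thesis using mu_bound[OF Vl(2,3)] by simp
  qed
  have ge: "s \<ge> - int (length (x @ y))" if "s \<in> S" for s
    using that mu_fork_ge unfolding S_def by blast
  have fin: "finite S" by (rule finite_subset[of _ "{- int (length (x @ y)) .. snd (St x y)}"]) (use le ge in auto)
  have ne: "S \<noteq> {}" using exists_closed_fork[of "x @ y"] unfolding S_def by blast
  have "mu x y = Max S" unfolding mu_def S_def by simp
  then show ?thesis using Max_in[OF fin ne] le by simp
qed




definition gam :: "real \<Rightarrow> real" where "gam e = 1 + e^2/4"
definition alp :: "real \<Rightarrow> real" where "alp e = 1 + e"
definition lam :: "real \<Rightarrow> real" where "lam e = 1 - e^3/8"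
definition pp :: "real \<Rightarrow> real" where "pp e = (1 - e)/2"

lemma e_pows: fixes e :: real assumes "0 < e" "e < 1"
  shows "e^4 \<le> e^3" "e^3 \<le> e^2" "e^2 \<le> e" "e^5 \<le> e^4" "0 < e^2" "0 < e^3" "0 < e^4" "0 < e^5"
proof -
  show "e^4 \<le> e^3" "e^3 \<le> e^2" "e^5 \<le> e^4" using assms by (auto intro!: power_decreasing)
  show "e^2 \<le> e" using power_decreasing[of 1 2 e] assms by simp
  show "0 < e^2" "0 < e^3" "0 < e^4" "0 < e^5" using assms by auto
qed

lemma N1: assumes "0 < e" "e < 1"
  shows "pp e * gam e + (1 - pp e) / gam e \<le> lam e" "1 / gam e \<le> lam e"
proof -
  have g: "gam e > 0" unfolding gam_def by (simp add: add_pos_nonneg)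
  have id1: "lam e * gam e - (pp e * gam e * gam e + (1 - pp e)) = e^3/8 - e^4/32"
    unfolding lam_def gam_def pp_def by (simp add: field_simps eval_nat_numeral)
  have "e^4/32 \<le> e^3/8" using e_pows[OF assms] by linarith
  then have "pp e * gam e * gam e + (1 - pp e) \<le> lam e * gam e" using id1 by simp
  then show "pp e * gam e + (1 - pp e) / gam e \<le> lam e" using g by (simp add: field_simps)
  have id2: "lam e * gam e - 1 = e^2/4 - e^3/8 - e^5/32"
    unfolding lam_def gam_def by (simp add: field_simps eval_nat_numeral)
  have "e^5/32 + e^3/8 \<le> e^2/4" using e_pows[OF assms] by linarith
  then have "1 \<le> lam e * gam e" using id2 by simp
  then show "1 / gam e \<le> lam e" using g by (simp add: field_simps)
qed

lemma N3: assumes "0 < e" "e < 1"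
  shows "pp e * alp e + (1 - pp e) * gam e / alp e \<le> lam e" "gam e / alp e \<le> lam e"
proof -
  have a: "alp e > 0" unfolding alp_def using assms by simp
  have id1: "lam e * alp e - (pp e * alp e * alp e + (1 - pp e) * gam e) = (1 + e) * e^2 * (3 - e) / 8"
    unfolding lam_def gam_def pp_def alp_def by (simp add: field_simps eval_nat_numeral)
  have "(1 + e) * e^2 * (3 - e) / 8 \<ge> 0" using assms by simp
  then have "pp e * alp e * alp e + (1 - pp e) * gam e \<le> lam e * alp e" using id1 by simp
  then show "pp e * alp e + (1 - pp e) * gam e / alp e \<le> lam e" using a by (simp add: field_simps)
  have id2: "lam e * alp e - gam e = e - e^2/4 - e^3/8 - e^4/8"
    unfolding lam_def gam_def alp_def by (simp add: field_simps eval_nat_numeral)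
  have "e^2/4 + e^3/8 + e^4/8 \<le> e" using e_pows[OF assms] by linarith
  then have "gam e \<le> lam e * alp e" using id2 by simp
  then show "gam e / alp e \<le> lam e" using a by (simp add: field_simps)
qed

lemma basic: assumes "0 < e" "e < 1"
  shows "1 \<le> gam e" "gam e \<le> alp e" "0 < lam e" "0 \<le> pp e" "pp e \<le> 1"
proof -
  have "e^3 \<le> e^2" "e^2 \<le> e" "e^2 \<ge> 0" "e^3 < 8" using e_pows[OF assms] assms by linarith+
  then show "1 \<le> gam e" "gam e \<le> alp e" "0 < lam e" "0 \<le> pp e" "pp e \<le> 1"
    using assms unfolding gam_def alp_def lam_def pp_def by (auto simp: divide_le_eq_1)
qed

lemma N2: assumes "0 < e" "e < 1"
  shows "pp e * alp e + (1 - pp e) / alp e \<le> lam e" "1 / alp e \<le> lam e"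
proof -
  have a: "alp e > 0" unfolding alp_def using assms by simp
  have "(1 - pp e) / alp e \<le> (1 - pp e) * gam e / alp e"
    using basic[OF assms] a mult_left_mono[of 1 "gam e" "1 - pp e"] by (intro divide_right_mono) auto
  then show "pp e * alp e + (1 - pp e) / alp e \<le> lam e" using N3(1)[OF assms] by simp
  have "1 / alp e \<le> gam e / alp e" using basic[OF assms] a by (simp add: divide_right_mono)
  then show "1 / alp e \<le> lam e" using N3(2)[OF assms] by simp
qed

lemma N4: assumes "0 < e" "e < 1"
  shows "pp e * gam e + (1 - pp e) * gam e / alp e \<le> lam e"
  using N3(1)[OF assms] basic[OF assms] mult_left_mono[of "gam e" "alp e" "pp e"] by simp




lemma mix:
  fixes PT PF q a b K :: real
  assumes "0 \<le> PT" "0 \<le> PF" "PT \<le> q * (PT + PF)" "q * a + (1 - q) * b \<le> K" "b \<le> K"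
  shows "PT * a + PF * b \<le> (PT + PF) * K"
proof (cases "a \<le> b")
  case True
  have "PT * a \<le> PT * b" using True assms(1) by (rule mult_left_mono[OF _ ]) 
  then have "PT * a + PF * b \<le> (PT + PF) * b" by (simp add: algebra_simps)
  also have "\<dots> \<le> (PT + PF) * K" using assms by (intro mult_left_mono) auto
  finally show ?thesis .
next
  case False
  have "PT * (a - b) \<le> (q * (PT + PF)) * (a - b)" using False assms(3) by (intro mult_right_mono) auto
  then have "PT * a + PF * b \<le> (PT + PF) * (q * a + (1 - q) * b)" by (simp add: algebra_simps)
  also have "\<dots> \<le> (PT + PF) * K" using assms by (intro mult_left_mono) auto
  finally show ?thesis .
qed

lemma prob_sum:
  assumes "finite A" "set_pmf p \<subseteq> A"
  shows "measure_pmf.prob p S = (\<Sum>w\<in>A \<inter> S. pmf p w)"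
proof -
  have "measure_pmf.prob p S = measure_pmf.prob p (S \<inter> set_pmf p)" by (simp add: measure_Int_set_pmf)
  also have "S \<inter> set_pmf p = (A \<inter> S) \<inter> set_pmf p" using assms(2) by auto
  also have "measure_pmf.prob p \<dots> = measure_pmf.prob p (A \<inter> S)" by (simp add: measure_Int_set_pmf)
  also have "\<dots> = (\<Sum>w\<in>A \<inter> S. pmf p w)" using assms(1) by (simp add: measure_measure_pmf_finite)
  finally show ?thesis .
qed

lemma exp_step:
  fixes p :: "bool list pmf" and Psi :: "bool list \<Rightarrow> real"
  assumes finA: "finite A" and supp: "set_pmf p \<subseteq> A" and len: "\<And>w. w \<in> A \<Longrightarrow> length w = n"
    and t: "t < n"
    and mart: "\<And>u. length u = t \<Longrightarrow> measure_pmf.prob p {w. take t w = u \<and> w ! t}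
                \<le> q * measure_pmf.prob p {w. take t w = u}"
    and cond1: "\<And>u. length u = t \<Longrightarrow> q * Psi (u @ [True]) + (1 - q) * Psi (u @ [False]) \<le> lm * Psi u + c"
    and cond2: "\<And>u. length u = t \<Longrightarrow> Psi (u @ [False]) \<le> lm * Psi u + c"
  shows "(\<Sum>w\<in>A. pmf p w * Psi (take (Suc t) w)) \<le> lm * (\<Sum>w\<in>A. pmf p w * Psi (take t w)) + c"
proof -
  define U where "U = take t ` A"
  define B where "B u = {w. w \<in> A \<and> take t w = u}" for u
  define Q where "Q u = (\<Sum>w\<in>B u. pmf p w)" for u
  have finU: "finite U" unfolding U_def using finA by simp
  have finB: "finite (B u)" for u unfolding B_def using finA by simp
  have e1: "(\<Sum>w\<in>A. pmf p w * Psi (take (Suc t) w)) = (\<Sum>u\<in>U. \<Sum>w\<in>B u. pmf p w * Psi (take (Suc t) w))"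
    unfolding U_def B_def by (rule sum.image_gen[OF finA])
  have e2: "(\<Sum>w\<in>A. pmf p w * Psi (take t w)) = (\<Sum>u\<in>U. Q u * Psi u)"
  proof -
    have "(\<Sum>w\<in>A. pmf p w * Psi (take t w)) = (\<Sum>u\<in>U. \<Sum>w\<in>B u. pmf p w * Psi (take t w))"
      unfolding U_def B_def by (rule sum.image_gen[OF finA])
    also have "\<dots> = (\<Sum>u\<in>U. \<Sum>w\<in>B u. pmf p w * Psi u)"
      by (intro sum.cong refl) (auto simp: B_def)
    also have "\<dots> = (\<Sum>u\<in>U. Q u * Psi u)" unfolding Q_def by (simp add: sum_distrib_right)
    finally show ?thesis .
  qed
  have e3: "(\<Sum>u\<in>U. Q u) = 1"
  proof -
    have "(\<Sum>u\<in>U. Q u) = (\<Sum>w\<in>A. pmf p w)"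
      unfolding Q_def U_def B_def by (rule sum.image_gen[OF finA, symmetric])
    then show ?thesis using sum_pmf_eq_1[OF finA supp] by simp
  qed
  have per_u: "(\<Sum>w\<in>B u. pmf p w * Psi (take (Suc t) w)) \<le> Q u * (lm * Psi u + c)" if uU: "u \<in> U" for u
  proof -
    obtain w0 where "w0 \<in> A" "u = take t w0" using uU unfolding U_def by blast
    then have lu: "length u = t" using len t by simp
    define PT where "PT = (\<Sum>w\<in>B u \<inter> {w. w ! t}. pmf p w)"
    define PF where "PF = (\<Sum>w\<in>B u \<inter> - {w. w ! t}. pmf p w)"
    have tk: "take (Suc t) w = u @ [w ! t]" if "w \<in> B u" for w
    proof -
      have "t < length w" using that len t unfolding B_def by auto
      then show ?thesis using that unfolding B_def by (auto simp: take_Suc_conv_app_nth)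
    qed
    have "(\<Sum>w\<in>B u. pmf p w * Psi (take (Suc t) w))
        = (\<Sum>w\<in>B u. if w ! t then pmf p w * Psi (u @ [True]) else pmf p w * Psi (u @ [False]))"
      by (intro sum.cong refl) (simp add: tk)
    also have "\<dots> = PT * Psi (u @ [True]) + PF * Psi (u @ [False])"
      unfolding PT_def PF_def by (simp add: sum.If_cases[OF finB] sum_distrib_right)
    finally have lhs: "(\<Sum>w\<in>B u. pmf p w * Psi (take (Suc t) w)) = PT * Psi (u @ [True]) + PF * Psi (u @ [False])" .
    have QPT: "Q u = PT + PF"
    proof -
      have "Q u = (\<Sum>w\<in>B u. if w ! t then pmf p w else pmf p w)" unfolding Q_def by simp
      also have "\<dots> = PT + PF" unfolding PT_def PF_def by (simp only: sum.If_cases[OF finB])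
      finally show ?thesis .
    qed
    have "PT = measure_pmf.prob p {w. take t w = u \<and> w ! t}"
    proof -
      have "A \<inter> {w. take t w = u \<and> w ! t} = B u \<inter> {w. w ! t}" unfolding B_def by auto
      then show ?thesis unfolding PT_def using prob_sum[OF finA supp] by simp
    qed
    moreover have "Q u = measure_pmf.prob p {w. take t w = u}"
    proof -
      have "A \<inter> {w. take t w = u} = B u" unfolding B_def by auto
      then show ?thesis unfolding Q_def using prob_sum[OF finA supp] by simp
    qed
    ultimately have "PT \<le> q * (PT + PF)" using mart[OF lu] QPT by simp
    moreover have "0 \<le> PT" "0 \<le> PF" unfolding PT_def PF_def by (auto intro: sum_nonneg)
    ultimately have "PT * Psi (u @ [True]) + PF * Psi (u @ [False]) \<le> (PT + PF) * (lm * Psi u + c)"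
      using mix cond1[OF lu] cond2[OF lu] by blast
    then show ?thesis using lhs QPT by simp
  qed
  have "(\<Sum>w\<in>A. pmf p w * Psi (take (Suc t) w)) \<le> (\<Sum>u\<in>U. Q u * (lm * Psi u + c))"
    unfolding e1 using per_u by (intro sum_mono) auto
  also have "\<dots> = lm * (\<Sum>u\<in>U. Q u * Psi u) + c * (\<Sum>u\<in>U. Q u)"
    by (simp add: algebra_simps sum.distrib sum_distrib_left)
  also have "\<dots> = lm * (\<Sum>w\<in>A. pmf p w * Psi (take t w)) + c" using e2 e3 by simp
  finally show ?thesis .
qed




definition Phi :: "real \<Rightarrow> nat \<times> int \<Rightarrow> real" where
  "Phi e s = (if snd s \<ge> 0 then gam e ^ fst s else gam e ^ (fst s + nat (- snd s)) / alp e ^ nat (- snd s))"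

lemma Phi_factor:
  assumes e: "0 < e" "e < 1" and inv: "snd s \<le> int (fst s)"
  shows "\<exists>A H. Phi e (stepS s True) = A * Phi e s \<and> Phi e (stepS s False) = H * Phi e s \<and>
    ((A = gam e \<and> H = 1 / gam e) \<or> (A = alp e \<and> H = 1 / alp e) \<or> (A = alp e \<and> H = gam e / alp e)
     \<or> (A = gam e \<and> H = gam e / alp e))"
proof -
  obtain r m where s: "s = (r, m)" by (cases s)
  have g0: "gam e > 0" and a0: "alp e > 0" using basic[OF e] by auto
  have inv': "m \<le> int r" using inv s by simp
  consider "m \<ge> 1" | "m = 0" "r > 0" | "m = 0" "r = 0" | "m < 0" by linarith
  then show ?thesis
  proof cases
    case 1
    then obtain r' where r: "r = Suc r'" using inv' by (cases r) auto
    have T: "Phi e (stepS s True) = gam e * Phi e s" using 1 unfolding Phi_def stepS_def stepR_def s r by simp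
    have F: "Phi e (stepS s False) = (1 / gam e) * Phi e s" using 1 g0 unfolding Phi_def stepS_def stepR_def s r by simp
    show ?thesis using T F by blast
  next
    case 2
    then obtain r' where r: "r = Suc r'" by (cases r) auto
    have T: "Phi e (stepS s True) = gam e * Phi e s" using 2 unfolding Phi_def stepS_def stepR_def s r by simp
    have F: "Phi e (stepS s False) = (1 / gam e) * Phi e s" using 2 g0 unfolding Phi_def stepS_def stepR_def s r by simp
    show ?thesis using T F by blast
  next
    case 3
    have T: "Phi e (stepS s True) = gam e * Phi e s" using 3 unfolding Phi_def stepS_def stepR_def s by simp
    have F: "Phi e (stepS s False) = (gam e / alp e) * Phi e s" using 3 unfolding Phi_def stepS_def stepR_def s by simp
    show ?thesis using T F by blast
  next
    case 4
    define d where "d = nat (- m)"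
    have md: "m = - int d" and d1: "d \<ge> 1" using 4 unfolding d_def by auto
    have Ps: "Phi e s = gam e ^ (r + d) / alp e ^ d" using 4 unfolding Phi_def s d_def by simp
    have T: "Phi e (stepS s True) = alp e * Phi e s"
    proof (cases "d = 1")
      case True
      then have "m = -1" using md by simp
      then show ?thesis unfolding Ps True using a0 unfolding Phi_def stepS_def stepR_def s by simp
    next
      case False
      then obtain d' where d': "d = Suc (Suc d')" using d1 by (cases d; cases "d - 1") auto
      have "Phi e (stepS s True) = gam e ^ (Suc r + Suc d') / alp e ^ Suc d'"
        unfolding Phi_def stepS_def stepR_def s using md d' by (simp add: nat_add_distrib)
      also have "\<dots> = alp e * (gam e ^ (r + d) / alp e ^ d)" using a0 d' by (simp add: field_simps)
      finally show ?thesis using Ps by simp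
    qed
    have F: "Phi e (stepS s False) = (if r > 0 then 1 / alp e else gam e / alp e) * Phi e s"
    proof -
      have m1: "nat (- (m - 1)) = Suc d" using md by simp
      have "Phi e (stepS s False) = gam e ^ ((r - 1) + Suc d) / alp e ^ Suc d"
        unfolding Phi_def stepS_def stepR_def s using 4 m1 by simp
      also have "\<dots> = (if r > 0 then 1 / alp e else gam e / alp e) * (gam e ^ (r + d) / alp e ^ d)"
        using a0 by (cases r) (simp_all add: field_simps)
      finally show ?thesis using Ps by simp
    qed
    show ?thesis
    proof (cases "r > 0")
      case True
      then have "Phi e (stepS s False) = (1 / alp e) * Phi e s" using F by simp
      then show ?thesis using T by blast
    next
      case False
      then have "Phi e (stepS s False) = (gam e / alp e) * Phi e s" using F by simp
      then show ?thesis using T by blast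
    qed
  qed
qed

lemma Phi_nonneg: assumes "0 < e" "e < 1" shows "Phi e s \<ge> 0"
  using basic[OF assms] unfolding Phi_def by auto

lemma Phi_ge1: assumes "0 < e" "e < 1" "snd s \<ge> 0" shows "Phi e s \<ge> 1"
  using basic[OF assms(1,2)] assms(3) unfolding Phi_def by (simp add: one_le_power)

lemma phi_step:
  assumes e: "0 < e" "e < 1" and inv: "snd s \<le> int (fst s)"
  shows "Phi e (stepS s False) \<le> lam e * Phi e s"
    "pp e * Phi e (stepS s True) + (1 - pp e) * Phi e (stepS s False) \<le> lam e * Phi e s"
proof -
  obtain A H where T: "Phi e (stepS s True) = A * Phi e s" and F: "Phi e (stepS s False) = H * Phi e s"
    and AH: "(A = gam e \<and> H = 1 / gam e) \<or> (A = alp e \<and> H = 1 / alp e) \<or> (A = alp e \<and> H = gam e / alp e)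
     \<or> (A = gam e \<and> H = gam e / alp e)"
    using Phi_factor[OF e inv] by blast
  have num: "pp e * A + (1 - pp e) * H \<le> lam e" "H \<le> lam e"
    using AH N1[OF e] N2[OF e] N3[OF e] N4[OF e] by auto
  have P0: "Phi e s \<ge> 0" using Phi_nonneg[OF e] .
  show "Phi e (stepS s False) \<le> lam e * Phi e s" unfolding F using mult_right_mono[OF num(2) P0] .
  have "pp e * Phi e (stepS s True) + (1 - pp e) * Phi e (stepS s False) = (pp e * A + (1 - pp e) * H) * Phi e s"
    unfolding T F by (simp add: algebra_simps)
  also have "\<dots> \<le> lam e * Phi e s" using mult_right_mono[OF num(1) P0] .
  finally show "pp e * Phi e (stepS s True) + (1 - pp e) * Phi e (stepS s False) \<le> lam e * Phi e s" .
qed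

lemma St_inv: "snd (St x y) \<le> int (fst (St x y))"
proof (induction y rule: rev_induct)
  case Nil then show ?case by (simp add: St_Nil)
next
  case (snoc b y) then show ?case by (auto simp: St_snoc stepS_def stepR_def)
qed

lemma x_cond:
  assumes e: "0 < e" "e < 1"
  shows "pp e * gam e ^ stepR R True + (1 - pp e) * gam e ^ stepR R False \<le> lam e * gam e ^ R + e^2/8"
    "gam e ^ stepR R False \<le> lam e * gam e ^ R + e^2/8"
proof -
  have g0: "gam e > 0" using basic[OF e] by auto
  have c0: "e^2/8 \<ge> 0" by simp
  show "pp e * gam e ^ stepR R True + (1 - pp e) * gam e ^ stepR R False \<le> lam e * gam e ^ R + e^2/8"
  proof (cases R)
    case 0
    have "pp e * gam e + (1 - pp e) = lam e + e^2/8"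
      unfolding pp_def gam_def lam_def by (simp add: field_simps eval_nat_numeral)
    then show ?thesis using 0 by (simp add: stepR_def)
  next
    case (Suc R')
    have "pp e * gam e ^ stepR R True + (1 - pp e) * gam e ^ stepR R False
        = (pp e * gam e + (1 - pp e) / gam e) * gam e ^ R"
      using g0 unfolding Suc stepR_def by (simp add: field_simps)
    also have "\<dots> \<le> lam e * gam e ^ R" using N1(1)[OF e] g0 by (intro mult_right_mono) auto
    finally show ?thesis using c0 by linarith
  qed
  show "gam e ^ stepR R False \<le> lam e * gam e ^ R + e^2/8"
  proof (cases R)
    case 0
    have "e^3 \<le> e^2" using e_pows[OF e] by simp
    then have "1 \<le> lam e + e^2/8" unfolding lam_def by simp
    then show ?thesis using 0 by (simp add: stepR_def)
  next
    case (Suc R')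
    have "gam e ^ stepR R False = (1 / gam e) * gam e ^ R"
      using g0 unfolding Suc stepR_def by simp
    also have "\<dots> \<le> lam e * gam e ^ R" using N1(2)[OF e] g0 by (intro mult_right_mono) auto
    finally show ?thesis using c0 by linarith
  qed
qed

lemma final_arith:
  fixes P e :: real
  assumes e: "0 < e" "e < 1" and P1: "P \<le> 1" and P2: "P \<le> lam e ^ k / e"
  shows "P \<le> 3 * exp (- (e ^ 4 * (1 - 0 * e) * real k / 64))"
proof -
  define x where "x = e ^ 4 * real k / 64"
  have goal: "3 * exp (- (e ^ 4 * (1 - 0 * e) * real k / 64)) = 3 * exp (- x)" unfolding x_def by simp
  show ?thesis
  proof (cases "exp x \<le> 3")
    case True
    have "1 \<le> 3 * exp (- x)" using True by (simp add: exp_minus field_simps)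
    then show ?thesis using P1 goal by simp
  next
    case False
    then have "exp 1 < exp x" using exp_le by linarith
    then have x1: "1 < x" by simp
    have l0: "0 \<le> lam e" using basic[OF e] by simp
    have "lam e \<le> exp (- (e^3/8))" unfolding lam_def using exp_ge_add_one_self[of "- (e^3/8)"] by simp
    then have "lam e ^ k \<le> exp (- (e^3/8)) ^ k" using l0 by (intro power_mono) auto
    also have "\<dots> = exp (- (e^3 * real k / 8))" by (simp add: exp_of_nat_mult[symmetric] algebra_simps)
    finally have lk: "lam e ^ k \<le> exp (- (e^3 * real k / 8))" .
    define z where "z = e^3 * real k / 8 - x"
    have ek: "e^4 * real k \<le> e^3 * real k" using e_pows[OF e] by (intro mult_right_mono) auto
    define K where "K = e^3 * real k"
    have eK: "e * K > 64" using x1 unfolding x_def K_def by (simp add: power_Suc[symmetric] eval_nat_numeral algebra_simps)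
    have zK: "z \<ge> 7 * K / 64" unfolding z_def x_def K_def using ek by (simp add: mult.commute)
    have "e * z \<ge> e * (7 * K / 64)" using zK e by (intro mult_left_mono) auto
    moreover have "e * (7 * K / 64) = 7 / 64 * (e * K)" by simp
    ultimately have "e * z \<ge> 7" using eK by linarith
    then have "z \<ge> 7 / e" using e by (simp add: pos_divide_le_eq mult.commute)
    moreover have "7 / e \<ge> 1 / e" using e by (simp add: divide_right_mono)
    ultimately have "1 / e \<le> exp z" using exp_ge_add_one_self[of z] by linarith
    then have "1 / e * exp (- (e^3 * real k / 8)) \<le> exp z * exp (- (e^3 * real k / 8))"
      by (intro mult_right_mono) auto
    also have "\<dots> = exp (- x)" unfolding z_def by (simp add: exp_add[symmetric])
    finally have "exp (- (e^3 * real k / 8)) / e \<le> exp (- x)" by simp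
    moreover have "lam e ^ k / e \<le> exp (- (e^3 * real k / 8)) / e" using lk e by (simp add: divide_right_mono)
    ultimately have "P \<le> exp (- x)" using P2 by linarith
    moreover have "exp (- x) \<le> 3 * exp (- x)" by simp
    ultimately show ?thesis unfolding goal by linarith
  qed
qed




theorem mainTheorem16:
  shows "\<exists>C::real. \<forall>\<epsilon>::real. 0 < \<epsilon> \<and> \<epsilon> < 1 \<longrightarrow>
    (\<forall>(m::nat) (k::nat) (p :: bool list pmf).
       set_pmf p \<subseteq> {w. length w = m + k} \<and> eps_martingale \<epsilon> (m + k) p \<longrightarrow>
       measure_pmf.prob p {w. mu (take m w) (drop m w) \<ge> 0}
         \<le> 3 * exp (- (\<epsilon> ^ 4 * (1 - C * \<epsilon>) * real k / 64)))"
proof (intro exI[of _ "0::real"] allI impI)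
  fix e :: real and m k :: nat and p :: "bool list pmf"
  assume e': "0 < e \<and> e < 1"
  then have e: "0 < e" "e < 1" by auto
  assume H: "set_pmf p \<subseteq> {w. length w = m + k} \<and> eps_martingale e (m + k) p"
  define n where "n = m + k"
  define A where "A = {w :: bool list. length w = n}"
  have finA: "finite A"
  proof -
    have "finite {xs :: bool list. set xs \<subseteq> UNIV \<and> length xs = n}" by (rule finite_lists_length_eq) simp
    then show ?thesis unfolding A_def by simp
  qed
  have supp: "set_pmf p \<subseteq> A" using H unfolding A_def n_def by simp
  have len: "\<And>w. w \<in> A \<Longrightarrow> length w = n" unfolding A_def by simp
  have mart: "\<And>u. length u = t \<Longrightarrow> measure_pmf.prob p {w. take t w = u \<and> w ! t}
                \<le> pp e * measure_pmf.prob p {w. take t w = u}" if "t < n" for t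
    using H that unfolding eps_martingale_def pp_def n_def by blast
  define Ex where "Ex t = (\<Sum>w\<in>A. pmf p w * gam e ^ Rf (take t w))" for t
  have sum1: "(\<Sum>w\<in>A. pmf p w) = 1" using sum_pmf_eq_1[OF finA supp] .
  have lam0: "0 \<le> lam e" using basic[OF e] by simp
  have xb: "Ex t \<le> 1 / e" if "t \<le> m" for t
    using that
  proof (induction t)
    case 0
    have "Ex 0 = 1" unfolding Ex_def using sum1 by (simp add: Rf_def)
    then show ?case using e by simp
  next
    case (Suc t)
    have tn: "t < n" using Suc.prems unfolding n_def by simp
    have "Ex (Suc t) \<le> lam e * Ex t + e^2/8"
      unfolding Ex_def
      by (rule exp_step[OF finA supp len tn mart[OF tn], where Psi = "\<lambda>u. gam e ^ Rf u"])
         (simp_all add: Rf_snoc x_cond[OF e])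
    also have "\<dots> \<le> lam e * (1 / e) + e^2/8" using Suc lam0 by (intro add_right_mono mult_left_mono) auto
    also have "\<dots> = 1 / e" unfolding lam_def using e by (simp add: field_simps eval_nat_numeral)
    finally show ?case .
  qed
  define Fy where "Fy j = (\<Sum>w\<in>A. pmf p w * Phi e (St (take m w) (drop m (take (m + j) w))))" for j
  have yb: "Fy j \<le> lam e ^ j * (1 / e)" if "j \<le> k" for j
    using that
  proof (induction j)
    case 0
    have "Fy 0 = Ex m" unfolding Fy_def Ex_def by (intro sum.cong refl) (simp add: St_Nil Phi_def)
    then show ?case using xb[of m] by simp
  next
    case (Suc j)
    have tn: "m + j < n" using Suc.prems unfolding n_def by simp
    have ps: "Phi e (St (take m (u @ [b])) (drop m (u @ [b]))) = Phi e (stepS (St (take m u) (drop m u)) b)"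
      if "length u = m + j" for u b using that by (simp add: St_snoc)
    have "(\<Sum>w\<in>A. pmf p w * Phi e (St (take m (take (Suc (m + j)) w)) (drop m (take (Suc (m + j)) w))))
        \<le> lam e * (\<Sum>w\<in>A. pmf p w * Phi e (St (take m (take (m + j) w)) (drop m (take (m + j) w)))) + 0"
      by (rule exp_step[OF finA supp len tn mart[OF tn], where Psi = "\<lambda>u. Phi e (St (take m u) (drop m u))"])
         (simp_all add: St_snoc phi_step[OF e St_inv])
    then have "Fy (Suc j) \<le> lam e * Fy j" unfolding Fy_def by (simp add: min_def)
    also have "\<dots> \<le> lam e * (lam e ^ j * (1 / e))" using Suc lam0 by (intro mult_left_mono) auto
    finally show ?case by simp
  qed
  define S where "S = {w. mu (take m w) (drop m w) \<ge> 0}"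
  define G where "G w = Phi e (St (take m w) (drop m w))" for w
  have "measure_pmf.prob p S = (\<Sum>w\<in>A \<inter> S. pmf p w)" using prob_sum[OF finA supp] .
  also have "\<dots> \<le> (\<Sum>w\<in>A \<inter> S. pmf p w * G w)"
  proof (intro sum_mono)
    fix w assume "w \<in> A \<inter> S"
    then have "snd (St (take m w) (drop m w)) \<ge> 0" using mu_le[of "take m w" "drop m w"] unfolding S_def by simp
    then have "G w \<ge> 1" unfolding G_def using Phi_ge1[OF e] by simp
    then show "pmf p w \<le> pmf p w * G w" using mult_left_mono[of 1 "G w" "pmf p w"] by simp
  qed
  also have "\<dots> \<le> (\<Sum>w\<in>A. pmf p w * G w)"
    using finA Phi_nonneg[OF e] unfolding G_def by (intro sum_mono2) auto
  also have "\<dots> = Fy k" unfolding Fy_def G_def using len n_def by (intro sum.cong refl) simp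
  also have "\<dots> \<le> lam e ^ k * (1 / e)" using yb by simp
  finally have P2: "measure_pmf.prob p S \<le> lam e ^ k / e" by simp
  have P1: "measure_pmf.prob p S \<le> 1" by (rule measure_pmf.prob_le_1)
  show "measure_pmf.prob p {w. mu (take m w) (drop m w) \<ge> 0}
         \<le> 3 * exp (- (e ^ 4 * (1 - 0 * e) * real k / 64))"
    using final_arith[OF e P1 P2] unfolding S_def .
qed


end
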